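(* Every caterpillar with maximum degree at most $5$ is odd prime.
   Context: All graphs are finite and simple. A graph $G$ of order $N$ is odd prime if there is a bijection $\ell:V(G)\to\{1,3,\ldots,2N-1\}$ with $\gcd(\ell(u),\ell(v))=1$ for every edge $uv$. A caterpillar is a tree containing a path $v_1,\ldots,v_n$ (the spine) such that every vertex not on the spine is a leaf adjacent to one of the interior spine vertices $v_2,\ldots,v_{n-1}$. *)

theory Defs
  imports Main "HOL-Computational_Algebra.Primes"
begin

definition simple_graph :: "'a set \<Rightarrow> ('a \<Rightarrow> 'a \<Rightarrow> bool) \<Rightarrow> bool" where
  "simple_graph V E \<longleftrightarrow> finite V \<and> (\<forall>u v. E u v \<longrightarrow> u \<in> V \<and> v \<in> V)
     \<and> (\<forall>u v. E u v \<longrightarrow> E v u) \<and> (\<forall>u. \<not> E u u)"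

definition degree :: "'a set \<Rightarrow> ('a \<Rightarrow> 'a \<Rightarrow> bool) \<Rightarrow> 'a \<Rightarrow> nat" where
  "degree V E v = card {u \<in> V. E v u}"

definition is_path :: "'a set \<Rightarrow> ('a \<Rightarrow> 'a \<Rightarrow> bool) \<Rightarrow> 'a list \<Rightarrow> bool" where
  "is_path V E xs \<longleftrightarrow> xs \<noteq> [] \<and> distinct xs \<and> set xs \<subseteq> V
     \<and> (\<forall>i. Suc i < length xs \<longrightarrow> E (xs ! i) (xs ! Suc i))"

definition is_cycle :: "'a set \<Rightarrow> ('a \<Rightarrow> 'a \<Rightarrow> bool) \<Rightarrow> 'a list \<Rightarrow> bool" where
  "is_cycle V E xs \<longleftrightarrow> is_path V E xs \<and> length xs \<ge> 3 \<and> E (last xs) (hd xs)"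

definition connected_graph :: "'a set \<Rightarrow> ('a \<Rightarrow> 'a \<Rightarrow> bool) \<Rightarrow> bool" where
  "connected_graph V E \<longleftrightarrow>
     (\<forall>u\<in>V. \<forall>v\<in>V. \<exists>xs. is_path V E xs \<and> hd xs = u \<and> last xs = v)"

definition is_tree :: "'a set \<Rightarrow> ('a \<Rightarrow> 'a \<Rightarrow> bool) \<Rightarrow> bool" where
  "is_tree V E \<longleftrightarrow> simple_graph V E \<and> V \<noteq> {} \<and> connected_graph V E
     \<and> (\<nexists>xs. is_cycle V E xs)"

text \<open>Caterpillar: a tree with a path (spine) v_1..v_n such that every vertex not
on the spine is a leaf adjacent to an interior spine vertex v_2..v_{n-1}
(0-based indices 1..n-2).\<close>
definition caterpillar :: "'a set \<Rightarrow> ('a \<Rightarrow> 'a \<Rightarrow> bool) \<Rightarrow> bool" where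
  "caterpillar V E \<longleftrightarrow> is_tree V E \<and>
     (\<exists>sp. is_path V E sp \<and>
        (\<forall>x \<in> V - set sp. degree V E x = 1 \<and>
           (\<exists>i. 0 < i \<and> Suc i < length sp \<and> E x (sp ! i))))"

definition odd_prime :: "'a set \<Rightarrow> ('a \<Rightarrow> 'a \<Rightarrow> bool) \<Rightarrow> bool" where
  "odd_prime V E \<longleftrightarrow> (\<exists>l :: 'a \<Rightarrow> nat.
     bij_betw l V {k. odd k \<and> k < 2 * card V} \<and>
     (\<forall>u v. E u v \<longrightarrow> coprime (l u) (l v)))"

end

theory Submission
  imports Defs
begin

definition gd :: "nat \<Rightarrow> nat \<Rightarrow> bool" where
  "gd p q \<longleftrightarrow> (max p q - min p q \<in> {1,2,4} \<or> (max p q - min p q = 3 \<and> min p q mod 3 \<noteq> 1))"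

lemma cop_shift:
  fixes a d :: nat
  assumes "coprime a d" shows "coprime a (a + d)"
  using assms by (simp add: coprime_iff_gcd_eq_1 gcd_add2)

lemma t3: "prime (3::nat)" by simp

lemma gd_coprime:
  assumes "gd p q" shows "coprime (2*p+1) (2*q+1)"
proof -
  have main: "coprime (2*a+1) (2*(a+d)+1)" if hd: "d \<in> {1,2,4} \<or> (d = 3 \<and> a mod 3 \<noteq> 1)" for a d :: nat
  proof -
    have e: "2*(a+d)+1 = (2*a+1) + 2*d" by simp
    have "coprime (2*a+1) (2*d)"
    proof -
      have o: "odd (2*a+1)" by simp
      have "coprime (2*a+1) (2::nat)" using o by (simp add: coprime_commute)
      moreover have "coprime (2*a+1) d"
      proof -
        consider "d = 1" | "d = 2" | "d = 4" | "d = 3" "a mod 3 \<noteq> 1" using hd by blast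
        then show ?thesis
        proof cases
          case 1 then show ?thesis by simp
        next
          case 2 then show ?thesis using o by (simp add: coprime_commute)
        next
          case 3
          have c2: "coprime (2*a+1) (2::nat)" using o by (simp add: coprime_commute)
          have "coprime (2*a+1) (2*2::nat)" using c2 by (simp only: coprime_mult_right_iff)
          then show ?thesis using 3 by simp
        next
          case 4
          have "\<not> (3::nat) dvd (2*a+1)" using 4(2) by presburger
          then have "coprime (3::nat) (2*a+1)" by (rule prime_imp_coprime[OF t3])
          then show ?thesis using 4 by (simp add: coprime_commute)
        qed
      qed
      ultimately show ?thesis by simp
    qed
    then show ?thesis unfolding e by (rule cop_shift)
  qed
  show ?thesis
  proof (cases "p \<le> q")
    case True
    then obtain d where "q = p + d" using le_Suc_ex by blast
    then show ?thesis using main[of d p] assms True unfolding gd_def by auto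
  next
    case False
    then obtain d where "p = q + d" using le_Suc_ex[of q p] by auto
    then show ?thesis using main[of d q] assms False unfolding gd_def by (auto simp: coprime_commute)
  qed
qed

definition dflt :: "nat \<Rightarrow> nat" where "dflt k = (if k \<le> 1 then 0 else k - 1)"
definition strat :: "nat \<Rightarrow> nat \<Rightarrow> nat \<Rightarrow> nat" where
  "strat r m k = (if r = 1 \<and> m = 1 \<and> k = 3 then 3 else if r = 2 \<and> m = 1 \<and> k = 2 then 2 else dflt k)"

lemma gd_off: "gd (P+x) (P+y) \<longleftrightarrow> (max x y - min x y \<in> {1,2,4} \<or> (max x y - min x y = 3 \<and> (P mod 3 + min x y) mod 3 \<noteq> 1))"
  unfolding gd_def by (simp add: mod_add_left_eq max_def min_def)

lemma all_lt3: "(\<forall>j<(3::nat). Q j) \<longleftrightarrow> Q 0 \<and> Q 1 \<and> Q 2"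
  by (auto simp: less_Suc_eq numeral_eq_Suc)
lemma all_lt2: "(\<forall>j<(2::nat). Q j) \<longleftrightarrow> Q 0 \<and> Q 1"
  by (auto simp: less_Suc_eq numeral_eq_Suc)
lemma all_lt1: "(\<forall>j<(1::nat). Q j) \<longleftrightarrow> Q 0"
  by auto

definition gdo :: "nat \<Rightarrow> nat \<Rightarrow> nat \<Rightarrow> bool" where
  "gdo m x y \<longleftrightarrow> (max x y - min x y \<in> {1,2,4} \<or> (max x y - min x y = 3 \<and> (m + min x y) mod 3 \<noteq> 1))"

lemma gd_gdo: "gd (P+x) (P+y) \<longleftrightarrow> gdo (P mod 3) x y"
  unfolding gd_off gdo_def ..

definition chk :: "nat \<Rightarrow> nat \<Rightarrow> nat \<Rightarrow> bool" where
  "chk r m k \<longleftrightarrow> strat r m k \<le> k \<and> k \<le> strat r m k + 1 \<and> gdo m 0 (r + strat r m k) \<and>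
    (\<forall>j<k. gdo m (r + strat r m k) (r + (if j < strat r m k then j else j+1)))"

lemma chk_list: "chk 1 0 0 \<and> chk 1 0 1 \<and> chk 1 0 2 \<and> chk 1 0 3 \<and> chk 1 1 0 \<and> chk 1 1 1 \<and> chk 1 1 2 \<and> chk 1 1 3 \<and> chk 1 2 0 \<and> chk 1 2 1 \<and> chk 1 2 2 \<and> chk 1 2 3 \<and> chk 2 0 0 \<and> chk 2 0 1 \<and> chk 2 0 2 \<and> chk 2 0 3 \<and> chk 2 1 0 \<and> chk 2 1 1 \<and> chk 2 1 2 \<and> chk 2 1 3 \<and> chk 2 2 0 \<and> chk 2 2 1 \<and> chk 2 2 2 \<and> chk 2 2 3"
  by (simp add: chk_def strat_def dflt_def gdo_def all_lt3 all_lt2 all_lt1)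

lemma chk_all: assumes "r = 1 \<or> r = 2" "m < 3" "k \<le> 3" shows "chk r m k"
proof -
  have m: "m = 0 \<or> m = 1 \<or> m = 2" using assms by auto
  have k: "k = 0 \<or> k = 1 \<or> k = 2 \<or> k = 3" using assms by auto
  show ?thesis using assms(1) m k by (elim disjE) (simp_all only: chk_list)
qed

definition chk0 :: "nat \<Rightarrow> bool" where
  "chk0 k \<longleftrightarrow> dflt k \<le> k \<and> k \<le> dflt k + 1 \<and>
    (\<forall>j<k. gdo 0 (dflt k) (if j < dflt k then j else j+1))"

lemma chk0_all: assumes "k \<le> 3" shows "chk0 k"
proof -
  have "k = 0 \<or> k = 1 \<or> k = 2 \<or> k = 3" using assms by auto
  moreover have c: "chk0 0 \<and> chk0 1 \<and> chk0 2 \<and> chk0 3"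
    by (simp add: chk0_def dflt_def gdo_def all_lt3 all_lt2 all_lt1)
  ultimately show ?thesis by (elim disjE) (simp_all only: c)
qed

lemma gd_sym: "gd p q \<longleftrightarrow> gd q p"
  unfolding gd_def by (simp add: max.commute min.commute)

definition blk :: "(nat \<Rightarrow> nat) \<Rightarrow> nat \<Rightarrow> nat" where
  "blk k i = i + (\<Sum>j<i. k j)"

fun off :: "(nat \<Rightarrow> nat) \<Rightarrow> nat \<Rightarrow> nat" where
  "off k 0 = dflt (k 0)"
| "off k (Suc i) = strat (k i + 1 - off k i) ((blk k i + off k i) mod 3) (k (Suc i))"

definition spos :: "(nat \<Rightarrow> nat) \<Rightarrow> nat \<Rightarrow> nat" where
  "spos k i = blk k i + off k i"

definition lpos :: "(nat \<Rightarrow> nat) \<Rightarrow> nat \<Rightarrow> nat \<Rightarrow> nat" where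
  "lpos k i j = blk k i + (if j < off k i then j else j+1)"

lemma blk_Suc: "blk k (Suc i) = blk k i + k i + 1"
  unfolding blk_def by simp

lemma blk_0: "blk k 0 = 0"
  unfolding blk_def by simp

lemma blk_mono: "i < i' \<Longrightarrow> blk k (Suc i) \<le> blk k i'"
proof (induction i')
  case 0 then show ?case by simp
next
  case (Suc i')
  then show ?case by (cases "i = i'") (auto simp: blk_Suc)
qed

lemma off_inv:
  assumes "\<forall>i. k i \<le> 3"
  shows "off k i \<le> k i \<and> k i \<le> off k i + 1"
proof (induction i)
  case 0 then show ?case using chk0_all[of "k 0"] assms unfolding chk0_def by simp
next
  case (Suc i)
  have r: "k i + 1 - off k i = 1 \<or> k i + 1 - off k i = 2" using Suc by auto
  have "chk (k i + 1 - off k i) ((blk k i + off k i) mod 3) (k (Suc i))"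
    by (rule chk_all[OF r]) (use assms in auto)
  then show ?case unfolding chk_def by simp
qed

lemma step_facts:
  assumes "\<forall>i. k i \<le> 3"
  shows "gd (spos k i) (spos k (Suc i)) \<and>
    (\<forall>j<k (Suc i). gd (spos k (Suc i)) (lpos k (Suc i) j))"
proof -
  define r where "r = k i + 1 - off k i"
  define P where "P = spos k i"
  have inv: "off k i \<le> k i \<and> k i \<le> off k i + 1" using off_inv[OF assms] .
  have r: "r = 1 \<or> r = 2" using inv unfolding r_def by auto
  have c: "chk r (P mod 3) (k (Suc i))"
    by (rule chk_all[OF r]) (use assms in auto)
  have b: "blk k (Suc i) = P + r" using inv unfolding P_def r_def spos_def blk_Suc by simp
  have o: "off k (Suc i) = strat r (P mod 3) (k (Suc i))" unfolding r_def P_def spos_def by simp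
  have s1: "spos k (Suc i) = P + (r + strat r (P mod 3) (k (Suc i)))"
    unfolding spos_def b o by simp
  have s2: "lpos k (Suc i) j = P + (r + (if j < strat r (P mod 3) (k (Suc i)) then j else j+1))" for j
    unfolding lpos_def b o by simp
  have s0: "spos k i = P + 0" unfolding P_def by simp
  show ?thesis unfolding s0 s1 s2 gd_gdo using c unfolding chk_def by simp
qed

lemma leaf_ok:
  assumes "\<forall>i. k i \<le> 3" "j < k i"
  shows "gd (spos k i) (lpos k i j)"
proof (cases i)
  case 0
  have c: "chk0 (k 0)" using assms chk0_all by simp
  have "gd (0 + dflt (k 0)) (0 + (if j < dflt (k 0) then j else j+1))"
    unfolding gd_gdo using c assms 0 unfolding chk0_def by simp
  then show ?thesis using 0 by (simp add: spos_def lpos_def blk_0)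
next
  case (Suc i')
  then show ?thesis using step_facts[OF assms(1), of i'] assms(2) by simp
qed

lemma spine_ok:
  assumes "\<forall>i. k i \<le> 3"
  shows "gd (spos k i) (spos k (Suc i))"
  using step_facts[OF assms] by simp

lemma spos_rng:
  assumes "\<forall>i. k i \<le> 3"
  shows "blk k i \<le> spos k i \<and> spos k i \<le> blk k i + k i"
  using off_inv[OF assms, of i] unfolding spos_def by simp

lemma lpos_rng:
  assumes "\<forall>i. k i \<le> 3" "j < k i"
  shows "blk k i \<le> lpos k i j \<and> lpos k i j \<le> blk k i + k i"
  using off_inv[OF assms(1), of i] assms(2) unfolding lpos_def by simp

lemma blk_same:
  assumes "blk k i \<le> a" "a \<le> blk k i + k i" "blk k i' \<le> a" "a \<le> blk k i' + k i'"
  shows "i = i'"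
proof (rule ccontr)
  assume "i \<noteq> i'"
  then consider "i < i'" | "i' < i" by linarith
  then show False
  proof cases
    case 1 then show False using blk_mono[OF 1, of k] assms unfolding blk_Suc by simp
  next
    case 2 then show False using blk_mono[OF 2, of k] assms unfolding blk_Suc by simp
  qed
qed

lemma lpos_inj: "lpos k i j = lpos k i j' \<Longrightarrow> j = j'"
  unfolding lpos_def by (auto split: if_splits)

lemma lpos_ne_spos: "lpos k i j \<noteq> spos k i"
  unfolding lpos_def spos_def by auto

lemma blk_upper: "i < n \<Longrightarrow> blk k i + k i < blk k n"
  using blk_mono[of i n k] unfolding blk_Suc by simp

lemma path_cycle:
  assumes p: "is_path V E sp" and ij: "i + 2 \<le> j" "j < length sp" and e: "E (sp!j) (sp!i)"
  shows "is_cycle V E (take (Suc (j - i)) (drop i sp))"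
proof -
  define xs where "xs = take (Suc (j - i)) (drop i sp)"
  have len: "length xs = Suc (j - i)" unfolding xs_def using ij by simp
  have nth: "xs ! m = sp ! (i + m)" if "m \<le> j - i" for m
    unfolding xs_def using that ij by simp
  have ne: "xs \<noteq> []" using len by auto
  have d: "distinct xs" unfolding xs_def using p unfolding is_path_def by simp
  have st: "set xs \<subseteq> V" unfolding xs_def using p unfolding is_path_def
    by (meson order_trans set_drop_subset set_take_subset)
  have adj: "E (xs ! m) (xs ! Suc m)" if "Suc m < length xs" for m
  proof -
    have "Suc (i + m) < length sp" using that len ij by simp
    then have "E (sp ! (i+m)) (sp ! Suc (i+m))" using p unfolding is_path_def by blast
    then show ?thesis using nth[of m] nth[of "Suc m"] that len by simp
  qed
  have h: "hd xs = sp ! i" using ne nth[of 0] by (simp add: hd_conv_nth)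
  have l: "last xs = sp ! j" using ne nth[of "j - i"] len ij by (simp add: last_conv_nth)
  show ?thesis unfolding is_cycle_def is_path_def xs_def[symmetric]
    using ne d st adj len ij h l e by auto
qed

theorem theorem4p4:
  fixes V :: "'a set" and E :: "'a \<Rightarrow> 'a \<Rightarrow> bool"
  assumes "caterpillar V E"
    and "\<forall>v\<in>V. degree V E v \<le> 5"
  shows "odd_prime V E"
proof -
  have tree: "is_tree V E" using assms(1) unfolding caterpillar_def by simp
  then have sg: "simple_graph V E" and nocyc: "\<nexists>xs. is_cycle V E xs" unfolding is_tree_def by auto
  have finV: "finite V" and inV: "\<And>u v. E u v \<Longrightarrow> u \<in> V \<and> v \<in> V"
    and sym: "\<And>u v. E u v \<Longrightarrow> E v u" and irr: "\<And>u. \<not> E u u"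
    using sg unfolding simple_graph_def by auto
  obtain sp where path: "is_path V E sp" and lf: "\<forall>x \<in> V - set sp. degree V E x = 1 \<and>
           (\<exists>i. 0 < i \<and> Suc i < length sp \<and> E x (sp ! i))"
    using assms(1) unfolding caterpillar_def by blast
  define n where "n = length sp"
  have dist: "distinct sp" and spV: "set sp \<subseteq> V"
    and sadj: "\<And>i. Suc i < n \<Longrightarrow> E (sp ! i) (sp ! Suc i)"
    using path unfolding is_path_def n_def by auto
  define par where "par x = (SOME i. 0 < i \<and> Suc i < n \<and> E x (sp ! i))" for x
  have par: "0 < par x \<and> Suc (par x) < n \<and> E x (sp ! par x)" if "x \<in> V - set sp" for x
    unfolding par_def using lf that someI_ex[of "\<lambda>i. 0 < i \<and> Suc i < n \<and> E x (sp ! i)"]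
    unfolding n_def by blast
  define L where "L i = {x \<in> V - set sp. par x = i}" for i
  define k where "k i = card (L i)" for i
  have finL: "finite (L i)" for i unfolding L_def using finV by simp
  have kb: "\<forall>i. k i \<le> 3"
  proof
    fix i
    show "k i \<le> 3"
    proof (cases "L i = {}")
      case True then show ?thesis unfolding k_def by simp
    next
      case False
      then obtain x where x: "x \<in> L i" by blast
      then have xi: "0 < i" "Suc i < n" using par[of x] unfolding L_def by auto
      define a where "a = sp ! (i - 1)"
      define b where "b = sp ! Suc i"
      have sv: "sp ! i \<in> V" using xi spV unfolding n_def by auto
      have ea: "E (sp ! i) a" unfolding a_def using sadj[of "i - 1"] xi sym by simp
      have eb: "E (sp ! i) b" unfolding b_def using sadj[of i] xi by simp
      have ab: "a \<noteq> b" unfolding a_def b_def using dist xi unfolding n_def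
        by (simp add: nth_eq_iff_index_eq)
      have aL: "a \<notin> L i" "b \<notin> L i" unfolding L_def a_def b_def using xi unfolding n_def by auto
      have sub: "L i \<union> {a, b} \<subseteq> {u \<in> V. E (sp ! i) u}"
      proof
        fix u assume "u \<in> L i \<union> {a, b}"
        then show "u \<in> {u \<in> V. E (sp ! i) u}"
        proof
          assume u: "u \<in> L i"
          then have "E u (sp ! i)" using par[of u] unfolding L_def by auto
          then show ?thesis using sym inV by blast
        next
          assume "u \<in> {a, b}" then show ?thesis using ea eb inV by blast
        qed
      qed
      have "card (L i \<union> {a, b}) = k i + 2" unfolding k_def using aL ab finL[of i] by simp
      moreover have "card (L i \<union> {a, b}) \<le> card {u \<in> V. E (sp ! i) u}"
        by (rule card_mono[OF _ sub]) (use finV in simp)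
      moreover have "card {u \<in> V. E (sp ! i) u} \<le> 5" using assms(2) sv unfolding degree_def by blast
      ultimately show ?thesis by simp
    qed
  qed
  have "\<forall>i. \<exists>f. bij_betw f (L i) {0..<k i}"
    using finL ex_bij_betw_finite_nat unfolding k_def by blast
  then obtain e where e: "\<And>i. bij_betw (e i) (L i) {0..<k i}" by metis
  define idx where "idx v = (THE i. i < n \<and> sp ! i = v)" for v
  have idx_nth: "idx (sp ! i) = i" if "i < n" for i
    unfolding idx_def
  proof (rule the_equality)
    show "i < n \<and> sp ! i = sp ! i" using that by simp
    fix j assume "j < n \<and> sp ! j = sp ! i"
    then show "j = i" using dist that unfolding n_def by (metis nth_eq_iff_index_eq)
  qed
  have idx_in: "idx v < n \<and> sp ! idx v = v" if vin: "v \<in> set sp" for v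
  proof -
    obtain i where "i < n" "sp ! i = v" using vin unfolding n_def by (auto simp: in_set_conv_nth)
    then show ?thesis using idx_nth by auto
  qed
  define pos where "pos v = (if v \<in> set sp then spos k (idx v) else lpos k (par v) (e (par v) v))" for v
  have leafL: "x \<in> L (par x)" if "x \<in> V - set sp" for x unfolding L_def using that by simp
  have ek: "e (par x) x < k (par x)" if "x \<in> V - set sp" for x
    using e[of "par x"] leafL[OF that] unfolding bij_betw_def by auto
  have blkv: "blk k (if v \<in> set sp then idx v else par v) \<le> pos v \<and>
      pos v \<le> blk k (if v \<in> set sp then idx v else par v) + k (if v \<in> set sp then idx v else par v)
      \<and> (if v \<in> set sp then idx v else par v) < n" if "v \<in> V" for v
  proof (cases "v \<in> set sp")
    case True then show ?thesis using spos_rng[OF kb] idx_in unfolding pos_def by simp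
  next
    case False
    have "par v < n" using par[of v] False that by auto
    then show ?thesis using lpos_rng[OF kb ek] False that unfolding pos_def by auto
  qed
  have pos_lt: "pos v < blk k n" if "v \<in> V" for v
    using blkv[OF that] blk_upper[of _ n k] by (meson le_less_trans)
  have inj: "inj_on pos V"
  proof
    fix u v assume u: "u \<in> V" and v: "v \<in> V" and eq: "pos u = pos v"
    define bu where "bu = (if u \<in> set sp then idx u else par u)"
    define bv where "bv = (if v \<in> set sp then idx v else par v)"
    have "bu = bv" using blk_same[of k bu "pos u" bv] blkv[OF u] blkv[OF v] eq
      unfolding bu_def bv_def by simp
    show "u = v"
    proof (cases "u \<in> set sp"; cases "v \<in> set sp")
      assume a: "u \<in> set sp" "v \<in> set sp"
      then show ?thesis using idx_in[of u] idx_in[of v] \<open>bu = bv\<close> unfolding bu_def bv_def by metis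
    next
      assume a: "u \<in> set sp" "v \<notin> set sp"
      then show ?thesis using eq lpos_ne_spos \<open>bu = bv\<close> unfolding bu_def bv_def pos_def by metis
    next
      assume a: "u \<notin> set sp" "v \<in> set sp"
      then show ?thesis using eq lpos_ne_spos \<open>bu = bv\<close> unfolding bu_def bv_def pos_def by metis
    next
      assume a: "u \<notin> set sp" "v \<notin> set sp"
      then have p: "par u = par v" using \<open>bu = bv\<close> unfolding bu_def bv_def by simp
      then have "e (par u) u = e (par u) v" using eq a lpos_inj unfolding pos_def by metis
      moreover have "u \<in> L (par u)" "v \<in> L (par u)" using u v a p unfolding L_def by auto
      ultimately show ?thesis using e[of "par u"] unfolding bij_betw_def inj_on_def by blast
    qed
  qed
  have Vsplit: "V = set sp \<union> (\<Union>i<n. L i)"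
  proof
    show "V \<subseteq> set sp \<union> (\<Union>i<n. L i)"
    proof
      fix x assume "x \<in> V"
      then show "x \<in> set sp \<union> (\<Union>i<n. L i)"
        using par[of x] leafL[of x] by (cases "x \<in> set sp") auto
    qed
    show "set sp \<union> (\<Union>i<n. L i) \<subseteq> V" using spV unfolding L_def by auto
  qed
  have cardU: "card (\<Union>i<n. L i) = (\<Sum>i<n. k i)"
    unfolding k_def by (rule card_UN_disjoint) (auto simp: finL finV L_def)
  have cardV: "card V = blk k n"
  proof -
    have "card V = card (set sp) + card (\<Union>i<n. L i)"
      unfolding Vsplit by (rule card_Un_disjoint) (auto simp: finL finV L_def)
    also have "card (set sp) = n" using dist unfolding n_def by (simp add: distinct_card)
    finally show ?thesis unfolding blk_def cardU by simp
  qed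
  define l where "l v = 2 * pos v + 1" for v
  define T where "T = {q. odd q \<and> q < 2 * card V}"
  have T_eq: "T = (\<lambda>p. 2 * p + 1) ` {..<card V}"
  proof
    show "T \<subseteq> (\<lambda>p. 2 * p + 1) ` {..<card V}"
    proof
      fix q assume "q \<in> T"
      then have "odd q" "q < 2 * card V" unfolding T_def by auto
      then have "q = 2 * (q div 2) + 1" "q div 2 < card V" by presburger+
      then show "q \<in> (\<lambda>p. 2 * p + 1) ` {..<card V}" by blast
    qed
    show "(\<lambda>p. 2 * p + 1) ` {..<card V} \<subseteq> T" unfolding T_def by auto
  qed
  have cardT: "card T = card V"
    unfolding T_eq by (subst card_image) (auto simp: inj_on_def)
  have injl: "inj_on l V" using inj unfolding l_def inj_on_def by auto
  have sub: "l ` V \<subseteq> T"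
  proof
    fix q assume "q \<in> l ` V"
    then obtain v where v: "v \<in> V" "q = 2 * pos v + 1" unfolding l_def by auto
    have "pos v < card V" using pos_lt[OF v(1)] cardV by simp
    then show "q \<in> T" using v unfolding T_def by simp
  qed
  have "l ` V = T"
    by (rule card_subset_eq) (use sub cardT card_image[OF injl] T_eq in auto)
  then have bij: "bij_betw l V T" using injl unfolding bij_betw_def by simp
  have leafedge: "gd (pos u) (pos v)" if uv: "E u v" and un: "u \<notin> set sp" for u v
  proof -
    have uV: "u \<in> V" "v \<in> V" using inV uv by auto
    have pu: "0 < par u \<and> Suc (par u) < n \<and> E u (sp ! par u)" using par uV un by auto
    have d1: "card {w \<in> V. E u w} = 1" using lf uV un unfolding degree_def by auto
    have w1: "v \<in> {w \<in> V. E u w}" using uV uv by simp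
    have w2: "sp ! par u \<in> {w \<in> V. E u w}" using pu spV unfolding n_def by auto
    have vv: "v = sp ! par u" using d1 w1 w2 by (metis card_1_singletonE singletonD)
    have pv: "pos v = spos k (par u)" using idx_nth[of "par u"] pu unfolding pos_def vv n_def by auto
    have pu': "pos u = lpos k (par u) (e (par u) u)" unfolding pos_def using un by simp
    show ?thesis unfolding pv pu' using leaf_ok[OF kb ek[of u]] uV un gd_sym by auto
  qed
  have edge: "gd (pos u) (pos v)" if uv: "E u v" for u v
  proof (cases "u \<in> set sp \<and> v \<in> set sp")
    case False
    then show ?thesis using leafedge uv sym gd_sym by blast
  next
    case True
    define i where "i = idx u"
    define j where "j = idx v"
    have ii: "i < n" "sp ! i = u" using idx_in True unfolding i_def by auto
    have jj: "j < n" "sp ! j = v" using idx_in True unfolding j_def by auto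
    have pij: "pos u = spos k i" "pos v = spos k j" unfolding pos_def i_def j_def using True by auto
    have "i \<noteq> j" using ii jj irr uv by auto
    have "j = Suc i \<or> i = Suc j"
    proof (rule ccontr)
      assume nn: "\<not> (j = Suc i \<or> i = Suc j)"
      then consider "i + 2 \<le> j" | "j + 2 \<le> i" using \<open>i \<noteq> j\<close> by linarith
      then show False
      proof cases
        case 1
        have "is_cycle V E (take (Suc (j - i)) (drop i sp))"
          by (rule path_cycle[OF path 1]) (use jj ii sym uv n_def in auto)
        then show False using nocyc by blast
      next
        case 2
        have "is_cycle V E (take (Suc (i - j)) (drop j sp))"
          by (rule path_cycle[OF path 2]) (use jj ii sym uv n_def in auto)
        then show False using nocyc by blast
      qed
    qed
    then show ?thesis using spine_ok[OF kb] gd_sym pij by auto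
  qed
  show ?thesis unfolding odd_prime_def
  proof (intro exI conjI allI impI)
    show "bij_betw l V {k. odd k \<and> k < 2 * card V}" using bij unfolding T_def .
    fix u v assume "E u v"
    then show "coprime (l u) (l v)" unfolding l_def using gd_coprime edge by blast
  qed
qed

end
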